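(* Let $(\Omega,\mathcal G,\mathbb P)$ be a probability space, $\mathcal F=(\mathcal F_t)_{t\in[0,\infty)}$ a filtration with $\mathcal F_\infty\subset\mathcal G$, and $X$ an $\mathbb R^d$-valued Lévy process relative to $\mathcal F$. If $\mathcal G=\sigma(X)$, then $\mathcal G\otimes\mathcal B_{[0,\infty)}=\mathcal O\vee\sigma_{\Omega\times[0,\infty)}(\blacktriangle X)$. If $\mathcal G=\sigma(X)$ only up to $\mathbb P$-negligible sets, then this equality holds up to evanescent sets.
   Context: $X$ is a Lévy process relative to $\mathcal F$: $\mathcal F$-adapted, càdlàg, $X_0=0$ a.s., and $X_t-X_s$ independent of $\mathcal F_s$ with the law of $X_{t-s}$ for $s\le t$. $(\mathbb D,\mathcal D)$: càdlàg paths $[0,\infty)\to\mathbb R^d$ with the $\sigma$-field generated by coordinate projections. $\blacktriangle X:\Omega\times[0,\infty)\to\mathbb D$ is $(\omega,t)\mapsto(X_{t+s}(\omega)-X_t(\omega))_{s\ge0}$, and $\sigma_{\Omega\times[0,\infty)}(\blacktriangle X)$ is the $\sigma$-field on $\Omega\times[0,\infty)$ it generates. $\mathcal O$ is the optional $\sigma$-field relative to $\mathcal F$. A set in $\Omega\times[0,\infty)$ is evanescent if its projection on $\Omega$ is contained in a $\mathbb P$-null set. *)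

theory Defs
  imports "HOL-Probability.Probability"
begin

text \<open>Paths are functions on the reals; only their values on [0,inf) matter.\<close>

definition cadlag :: "(real \<Rightarrow> 'v::real_normed_vector) \<Rightarrow> bool" where
  "cadlag f \<longleftrightarrow> (\<forall>t\<ge>0. (f \<longlongrightarrow> f t) (at_right t)) \<and>
                  (\<forall>t>0. \<exists>l. (f \<longlongrightarrow> l) (at_left t))"

text \<open>A filtration indexed by [0,inf) of sub-sigma-fields of the sigma-field of M
  (so that F_infinity is contained in the sigma-field of M).\<close>
definition filtration_on :: "'a measure \<Rightarrow> (real \<Rightarrow> 'a set set) \<Rightarrow> bool" where
  "filtration_on M F \<longleftrightarrow> (\<forall>t\<ge>0. sigma_algebra (space M) (F t) \<and> F t \<subseteq> sets M) \<and>
                          (\<forall>s t. 0 \<le> s \<longrightarrow> s \<le> t \<longrightarrow> F s \<subseteq> F t)"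

definition adapted :: "'a measure \<Rightarrow> (real \<Rightarrow> 'a set set) \<Rightarrow> (real \<Rightarrow> 'a \<Rightarrow> 'v::topological_space) \<Rightarrow> bool" where
  "adapted M F X \<longleftrightarrow> (\<forall>t\<ge>0. \<forall>B\<in>sets borel. X t -` B \<inter> space M \<in> F t)"

text \<open>Levy process relative to F: adapted, all paths cadlag, X_0 = 0 a.s., and for
  s <= t the increment X_t - X_s is independent of F_s with the law of X_{t-s}.\<close>
definition levy_process :: "'a measure \<Rightarrow> (real \<Rightarrow> 'a set set) \<Rightarrow> (real \<Rightarrow> 'a \<Rightarrow> 'v::euclidean_space) \<Rightarrow> bool" where
  "levy_process M F X \<longleftrightarrow>
     adapted M F X \<and>
     (\<forall>\<omega>\<in>space M. cadlag (\<lambda>t. X t \<omega>)) \<and>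
     (AE \<omega> in M. X 0 \<omega> = 0) \<and>
     (\<forall>s t. 0 \<le> s \<longrightarrow> s \<le> t \<longrightarrow>
        (\<forall>A\<in>F s. \<forall>B\<in>sets borel.
           measure M (A \<inter> {\<omega>\<in>space M. X t \<omega> - X s \<omega> \<in> B})
             = measure M A * measure M {\<omega>\<in>space M. X (t - s) \<omega> \<in> B}))"

definition sigma_proc :: "'a measure \<Rightarrow> (real \<Rightarrow> 'a \<Rightarrow> 'v::topological_space) \<Rightarrow> 'a set set" where
  "sigma_proc M X = sigma_sets (space M) {X t -` B \<inter> space M | t B. t \<ge> 0 \<and> B \<in> sets borel}"

definition Dspace :: "(real \<Rightarrow> 'v::real_normed_vector) set" where
  "Dspace = {f. cadlag f \<and> (\<forall>s<0. f s = 0)}"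

definition Dmeasure :: "(real \<Rightarrow> 'v::euclidean_space) measure" where
  "Dmeasure = sigma Dspace {{f\<in>Dspace. f s \<in> B} | s B. s \<ge> 0 \<and> B \<in> sets borel}"

definition shift_proc :: "(real \<Rightarrow> 'a \<Rightarrow> 'v::real_normed_vector) \<Rightarrow> 'a \<times> real \<Rightarrow> (real \<Rightarrow> 'v)" where
  "shift_proc X p = (\<lambda>s. if 0 \<le> s then X (snd p + s) (fst p) - X (snd p) (fst p) else 0)"

definition sigma_shift :: "'a measure \<Rightarrow> (real \<Rightarrow> 'a \<Rightarrow> 'v::euclidean_space) \<Rightarrow> ('a \<times> real) set set" where
  "sigma_shift M X = sets (vimage_algebra (space M \<times> {0..}) (shift_proc X) Dmeasure)"

definition optional_sets :: "'a measure \<Rightarrow> (real \<Rightarrow> 'a set set) \<Rightarrow> ('a \<times> real) set set" where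
  "optional_sets M F = sigma_sets (space M \<times> {0..})
     {{p \<in> space M \<times> {0..}. Y (snd p) (fst p) \<in> B} | (Y :: real \<Rightarrow> 'a \<Rightarrow> real) B.
        adapted M F Y \<and> (\<forall>\<omega>\<in>space M. cadlag (\<lambda>t. Y t \<omega>)) \<and> B \<in> sets borel}"

definition prod_sets :: "'a measure \<Rightarrow> ('a \<times> real) set set" where
  "prod_sets M = sets (M \<Otimes>\<^sub>M restrict_space borel {0::real..})"

definition join_sets :: "'a measure \<Rightarrow> ('a \<times> real) set set \<Rightarrow> ('a \<times> real) set set \<Rightarrow> ('a \<times> real) set set" where
  "join_sets M A B = sigma_sets (space M \<times> {0..}) (A \<union> B)"

definition evanescent :: "'a measure \<Rightarrow> ('a \<times> real) set \<Rightarrow> bool" where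
  "evanescent M S \<longleftrightarrow> (\<exists>N\<in>null_sets M. fst ` S \<subseteq> N)"

definition eq_upto_null :: "'a measure \<Rightarrow> 'a set set \<Rightarrow> 'a set set \<Rightarrow> bool" where
  "eq_upto_null M A B \<longleftrightarrow>
     (\<forall>S\<in>A. \<exists>S'\<in>B. \<exists>N\<in>null_sets M. ((S - S') \<union> (S' - S)) \<subseteq> N) \<and>
     (\<forall>S\<in>B. \<exists>S'\<in>A. \<exists>N\<in>null_sets M. ((S - S') \<union> (S' - S)) \<subseteq> N)"

definition eq_upto_evanescent :: "'a measure \<Rightarrow> ('a \<times> real) set set \<Rightarrow> ('a \<times> real) set set \<Rightarrow> bool" where
  "eq_upto_evanescent M A B \<longleftrightarrow>
     (\<forall>S\<in>A. \<exists>S'\<in>B. evanescent M (((S - S') \<union> (S' - S)))) \<and>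
     (\<forall>S\<in>B. \<exists>S'\<in>A. evanescent M (((S - S') \<union> (S' - S))))"

end

theory Submission
  imports Defs
begin

lemma flim_shift_right:
  fixes t s0 :: real
  shows "filterlim (\<lambda>s. t + s) (at_right (t + s0)) (at_right s0)"
  unfolding filterlim_at
  by (auto intro!: tendsto_eq_intros eventually_mono[OF eventually_at_right_less])

lemma flim_shift_left:
  fixes t s0 :: real
  shows "filterlim (\<lambda>s. t + s) (at_left (t + s0)) (at_left s0)"
  unfolding filterlim_at
proof (intro conjI)
  show "\<forall>\<^sub>F x in at_left s0. t + x \<in> {..<t + s0} \<and> t + x \<noteq> t + s0"
  proof -
    have "eventually (\<lambda>x. x \<in> {s0 - 1<..<s0}) (at_left s0)"
      by (rule eventually_at_left_real) simp
    then show ?thesis by eventually_elim auto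
  qed
qed (auto intro!: tendsto_eq_intros)

lemma shift_cadlag:
  fixes g :: "real \<Rightarrow> 'v::real_normed_vector"
  assumes g: "cadlag g" and t: "t \<ge> 0"
  shows "(\<lambda>s. if 0 \<le> s then g (t + s) - g t else 0) \<in> Dspace"
proof -
  let ?f = "\<lambda>s. if 0 \<le> s then g (t + s) - g t else 0"
  have r: "(?f \<longlongrightarrow> ?f s0) (at_right s0)" if "s0 \<ge> 0" for s0
  proof -
    have "((\<lambda>s. g (t + s)) \<longlongrightarrow> g (t + s0)) (at_right s0)"
      using g t that unfolding cadlag_def
      by (intro filterlim_compose[OF _ flim_shift_right]) auto
    then have "((\<lambda>s. g (t + s) - g t) \<longlongrightarrow> g (t + s0) - g t) (at_right s0)"
      by (intro tendsto_intros)
    moreover have "eventually (\<lambda>s. g (t + s) - g t = ?f s) (at_right s0)"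
      using eventually_at_right_less[of s0] by eventually_elim (use that in auto)
    ultimately show ?thesis using that by (simp add: tendsto_cong)
  qed
  have l: "\<exists>l. (?f \<longlongrightarrow> l) (at_left s0)" if "s0 > 0" for s0
  proof -
    have "t + s0 > 0" using t that by simp
    then obtain l where "(g \<longlongrightarrow> l) (at_left (t + s0))"
      using g unfolding cadlag_def by blast
    then have "((\<lambda>s. g (t + s)) \<longlongrightarrow> l) (at_left s0)"
      by (intro filterlim_compose[OF _ flim_shift_left])
    then have "((\<lambda>s. g (t + s) - g t) \<longlongrightarrow> l - g t) (at_left s0)"
      by (intro tendsto_intros)
    moreover have "eventually (\<lambda>s. g (t + s) - g t = ?f s) (at_left s0)"
    proof -
      have "eventually (\<lambda>s. s > 0) (at_left s0)"
      proof -
        have "eventually (\<lambda>x. x \<in> {0<..<s0}) (at_left s0)"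
          by (rule eventually_at_left_real) (use that in simp)
        then show ?thesis by eventually_elim auto
      qed
      then show ?thesis by eventually_elim auto
    qed
    ultimately show ?thesis by (auto simp add: tendsto_cong)
  qed
  show ?thesis unfolding Dspace_def cadlag_def using r l by auto
qed

lemma eval_measurable:
  fixes Phi :: "'b \<Rightarrow> real \<Rightarrow> 'v::metric_space"
  assumes meas: "\<And>s. s \<ge> 0 \<Longrightarrow> (\<lambda>x. Phi x s) \<in> borel_measurable N"
    and r: "r \<in> borel_measurable N" and rpos: "\<And>x. x \<in> space N \<Longrightarrow> r x \<ge> 0"
    and rc: "\<And>x. x \<in> space N \<Longrightarrow> (Phi x \<longlongrightarrow> Phi x (r x)) (at_right (r x))"
  shows "(\<lambda>x. Phi x (r x)) \<in> borel_measurable N"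
proof (rule borel_measurable_LIMSEQ_metric)
  define a where "a n x = (real_of_int \<lfloor>real (Suc n) * r x\<rfloor> + 1) / real (Suc n)" for n x
  show "(\<lambda>x. Phi x (a n x)) \<in> borel_measurable N" for n
  proof -
    have g: "(\<lambda>x. \<lfloor>real (Suc n) * r x\<rfloor>) \<in> measurable N (count_space UNIV)"
      by (rule measurable_compose[OF _ measurable_real_floor]) (use r in simp)
    have "(\<lambda>x. (\<lambda>k::int. \<lambda>x. Phi x ((max 0 (real_of_int k) + 1) / real (Suc n)))
               (\<lfloor>real (Suc n) * r x\<rfloor>) x) \<in> borel_measurable N"
      by (rule measurable_compose_countable[OF _ g]) (rule meas, simp)
    moreover have "x \<in> space N \<Longrightarrow> (max 0 (real_of_int \<lfloor>real (Suc n) * r x\<rfloor>) + 1) / real (Suc n) = a n x" for x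
      using rpos[of x] by (simp add: a_def)
    ultimately show ?thesis by (simp cong: measurable_cong)
  qed
  show "(\<lambda>n. Phi x (a n x)) \<longlonglongrightarrow> Phi x (r x)" if x: "x \<in> space N" for x
  proof -
    have lo: "r x < a n x" and hi: "a n x \<le> r x + inverse (real (Suc n))" for n
    proof -
      let ?c = "real (Suc n)"
      have c: "?c > 0" by simp
      have "?c * r x < real_of_int \<lfloor>?c * r x\<rfloor> + 1" by linarith
      then show "r x < a n x" unfolding a_def using c by (simp add: field_simps)
      have "real_of_int \<lfloor>?c * r x\<rfloor> \<le> ?c * r x" by linarith
      then have "real_of_int \<lfloor>?c * r x\<rfloor> / ?c \<le> r x" using c by (simp add: pos_divide_le_eq mult.commute)
      moreover have "a n x = real_of_int \<lfloor>?c * r x\<rfloor> / ?c + 1 / ?c"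
        unfolding a_def by (rule add_divide_distrib)
      ultimately show "a n x \<le> r x + inverse ?c" by (simp only: inverse_eq_divide)
    qed
    have up: "(\<lambda>n. r x + inverse (real (Suc n))) \<longlonglongrightarrow> r x"
      using tendsto_add[OF tendsto_const LIMSEQ_inverse_real_of_nat, of "r x"] by simp
    have e1: "eventually (\<lambda>n. r x \<le> a n x) sequentially"
      using lo by (simp add: less_imp_le)
    have e2: "eventually (\<lambda>n. a n x \<le> r x + inverse (real (Suc n))) sequentially"
      using hi by simp
    have "(\<lambda>n. a n x) \<longlonglongrightarrow> r x"
      by (rule tendsto_sandwich[OF e1 e2 tendsto_const up])
    then have "filterlim (\<lambda>n. a n x) (at_right (r x)) sequentially"
      unfolding filterlim_at using lo by (auto intro!: always_eventually simp: less_imp_neq[symmetric] dest: less_imp_neq)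
    then show ?thesis by (rule filterlim_compose[OF rc[OF x]])
  qed
qed

lemma cadlag_rc: "cadlag f \<Longrightarrow> t \<ge> 0 \<Longrightarrow> (f \<longlongrightarrow> f t) (at_right t)"
  unfolding cadlag_def by blast

lemma adapted_meas:
  assumes "adapted M F Y" "filtration_on M F" "t \<ge> 0"
  shows "Y t \<in> borel_measurable M"
proof (rule borel_measurableI)
  fix S :: "'b set" assume "open S"
  then have "S \<in> sets borel" by simp
  then have "Y t -` S \<inter> space M \<in> F t" using assms(1,3) unfolding adapted_def by blast
  then show "Y t -` S \<inter> space M \<in> sets M" using assms(2,3) unfolding filtration_on_def by blast
qed

lemma cadlag_min:
  fixes g :: "real \<Rightarrow> 'v::real_normed_vector"
  assumes g: "cadlag g"
  shows "cadlag (\<lambda>t. g (min t u))"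
  unfolding cadlag_def
proof (intro conjI allI impI)
  fix t :: real assume t: "t \<ge> 0"
  show "((\<lambda>t. g (min t u)) \<longlongrightarrow> g (min t u)) (at_right t)"
  proof (cases "t < u")
    case True
    have "eventually (\<lambda>s. s \<in> {t<..<u}) (at_right t)" by (rule eventually_at_right_real) fact
    then have "eventually (\<lambda>s. g s = g (min s u)) (at_right t)" by eventually_elim auto
    moreover have "(g \<longlongrightarrow> g t) (at_right t)" using g t by (rule cadlag_rc)
    ultimately show ?thesis using True by (simp add: tendsto_cong)
  next
    case False
    have "eventually (\<lambda>s. s > t) (at_right t)" by (rule eventually_at_right_less)
    then have "eventually (\<lambda>s. g u = g (min s u)) (at_right t)" by eventually_elim (use False in auto)
    moreover have "((\<lambda>s. g u) \<longlongrightarrow> g u) (at_right t)" by simp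
    ultimately have "((\<lambda>s. g (min s u)) \<longlongrightarrow> g u) (at_right t)" by (rule Lim_transform_eventually[rotated])
    then show ?thesis using False by simp
  qed
next
  fix t :: real assume t: "t > 0"
  show "\<exists>l. ((\<lambda>t. g (min t u)) \<longlongrightarrow> l) (at_left t)"
  proof (cases "t \<le> u")
    case True
    obtain l where l: "(g \<longlongrightarrow> l) (at_left t)" using g t unfolding cadlag_def by blast
    have "eventually (\<lambda>s. s \<in> {t - 1<..<t}) (at_left t)" by (rule eventually_at_left_real) simp
    then have "eventually (\<lambda>s. g s = g (min s u)) (at_left t)" by eventually_elim (use True in auto)
    then show ?thesis using l by (auto simp add: tendsto_cong)
  next
    case False
    have "eventually (\<lambda>s. s \<in> {u<..<t}) (at_left t)" by (rule eventually_at_left_real) (use False in simp)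
    then have "eventually (\<lambda>s. g u = g (min s u)) (at_left t)" by eventually_elim auto
    moreover have "((\<lambda>s. g u) \<longlongrightarrow> g u) (at_left t)" by simp
    ultimately have "((\<lambda>s. g (min s u)) \<longlongrightarrow> g u) (at_left t)" by (rule Lim_transform_eventually[rotated])
    then show ?thesis by blast
  qed
qed

lemma cadlag_inner:
  fixes g :: "real \<Rightarrow> 'v::real_inner"
  assumes g: "cadlag g"
  shows "cadlag (\<lambda>t. g t \<bullet> i)"
  unfolding cadlag_def
proof (intro conjI allI impI)
  fix t :: real assume t: "t \<ge> 0"
  have "(g \<longlongrightarrow> g t) (at_right t)" using g t by (rule cadlag_rc)
  then show "((\<lambda>t. g t \<bullet> i) \<longlongrightarrow> g t \<bullet> i) (at_right t)" by (intro tendsto_inner tendsto_const)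
next
  fix t :: real assume t: "t > 0"
  obtain l where "(g \<longlongrightarrow> l) (at_left t)" using g t unfolding cadlag_def by blast
  then have "((\<lambda>t. g t \<bullet> i) \<longlongrightarrow> l \<bullet> i) (at_left t)" by (intro tendsto_inner tendsto_const)
  then show "\<exists>l. ((\<lambda>t. g t \<bullet> i) \<longlongrightarrow> l) (at_left t)" by blast
qed

lemma measurable_prodR:
  fixes Y :: "real \<Rightarrow> 'a \<Rightarrow> 'v::metric_space"
  assumes meas: "\<And>t. t \<ge> 0 \<Longrightarrow> Y t \<in> borel_measurable M"
    and rc: "\<And>\<omega> t. \<omega> \<in> space M \<Longrightarrow> t \<ge> 0 \<Longrightarrow> ((\<lambda>s. Y s \<omega>) \<longlongrightarrow> Y t \<omega>) (at_right t)"
    and r: "r \<in> borel_measurable (M \<Otimes>\<^sub>M restrict_space borel {0::real..})"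
    and rpos: "\<And>p. p \<in> space M \<times> {0..} \<Longrightarrow> r p \<ge> 0"
  shows "(\<lambda>p. Y (r p) (fst p)) \<in> borel_measurable (M \<Otimes>\<^sub>M restrict_space borel {0::real..})"
proof (rule eval_measurable[where Phi = "\<lambda>p s. Y s (fst p)"])
  show "(\<lambda>x. Y s (fst x)) \<in> borel_measurable (M \<Otimes>\<^sub>M restrict_space borel {0..})" if "s \<ge> 0" for s
    by (rule measurable_compose[OF measurable_fst meas[OF that]])
  show "r \<in> borel_measurable (M \<Otimes>\<^sub>M restrict_space borel {0..})" by (rule r)
  show "r x \<ge> 0" if "x \<in> space (M \<Otimes>\<^sub>M restrict_space borel {0..})" for x
    using that rpos by (simp add: space_pair_measure)
  show "((\<lambda>s. Y s (fst x)) \<longlongrightarrow> Y (r x) (fst x)) (at_right (r x))"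
    if "x \<in> space (M \<Otimes>\<^sub>M restrict_space borel {0..})" for x
  proof -
    have "fst x \<in> space M" "r x \<ge> 0" using that rpos by (auto simp add: space_pair_measure)
    then show ?thesis by (rule rc)
  qed
qed

lemma snd_measR: "snd \<in> borel_measurable (M \<Otimes>\<^sub>M restrict_space borel {0::real..})"
proof -
  have "(\<lambda>x. x) \<in> measurable (restrict_space borel {0::real..}) borel"
    by (rule measurable_restrict_space1) simp
  from measurable_compose[OF measurable_snd this, of M] show ?thesis by simp
qed

definition NJ :: "'a measure \<Rightarrow> (real \<Rightarrow> 'a set set) \<Rightarrow> (real \<Rightarrow> 'a \<Rightarrow> 'v::euclidean_space) \<Rightarrow> ('a \<times> real) measure" where
  "NJ M F X = sigma (space M \<times> {0..}) (optional_sets M F \<union> sigma_shift M X)"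

lemma gen_sub_pow: "{{p \<in> S. Q Y B p} | Y B. R Y B} \<subseteq> Pow S"
  by auto

lemma optional_sets_sub: "optional_sets M F \<subseteq> Pow (space M \<times> {0..})"
proof
  fix x assume "x \<in> optional_sets M F"
  then have "x \<subseteq> space M \<times> {0..}"
    unfolding optional_sets_def by (rule sigma_sets_into_sp[rotated]) (rule gen_sub_pow)
  then show "x \<in> Pow (space M \<times> {0..})" by simp
qed

lemma sigma_shift_sub: "sigma_shift M X \<subseteq> Pow (space M \<times> {0..})"
  unfolding sigma_shift_def using sets.space_closed[of "vimage_algebra (space M \<times> {0..}) (shift_proc X) Dmeasure"]
  by (simp only: space_vimage_algebra)

lemma sets_NJ: "sets (NJ M F X) = join_sets M (optional_sets M F) (sigma_shift M X)"
  unfolding NJ_def join_sets_def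
  by (rule sets_measure_of) (use optional_sets_sub sigma_shift_sub in blast)

lemma space_NJ: "space (NJ M F X) = space M \<times> {0..}"
  unfolding NJ_def
  by (rule space_measure_of) (use optional_sets_sub sigma_shift_sub in blast)

lemma opt_in_NJ: "A \<in> optional_sets M F \<Longrightarrow> A \<in> sets (NJ M F X)"
  unfolding sets_NJ join_sets_def by (rule sigma_sets.Basic) simp

lemma shift_in_NJ: "A \<in> sigma_shift M X \<Longrightarrow> A \<in> sets (NJ M F X)"
  unfolding sets_NJ join_sets_def by (rule sigma_sets.Basic) simp

lemma opt_meas_NJ:
  fixes Y :: "real \<Rightarrow> 'a \<Rightarrow> real"
  assumes "adapted M F Y" "\<forall>\<omega>\<in>space M. cadlag (\<lambda>t. Y t \<omega>)"
  shows "(\<lambda>p. Y (snd p) (fst p)) \<in> borel_measurable (NJ M F X)"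
  unfolding measurable_def
proof (intro CollectI conjI ballI)
  show "(\<lambda>p. Y (snd p) (fst p)) \<in> space (NJ M F X) \<rightarrow> space borel" by simp
  fix B :: "real set" assume B: "B \<in> sets borel"
  have "(\<lambda>p. Y (snd p) (fst p)) -` B \<inter> space (NJ M F X) = {p \<in> space M \<times> {0..}. Y (snd p) (fst p) \<in> B}"
    by (auto simp: space_NJ)
  also have "\<dots> \<in> optional_sets M F"
  proof -
    let ?G = "{{p \<in> space M \<times> {0..}. Z (snd p) (fst p) \<in> C} | (Z :: real \<Rightarrow> 'a \<Rightarrow> real) C.
        adapted M F Z \<and> (\<forall>\<omega>\<in>space M. cadlag (\<lambda>t. Z t \<omega>)) \<and> C \<in> sets borel}"
    have "{p \<in> space M \<times> {0..}. Y (snd p) (fst p) \<in> B} \<in> ?G"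
      using assms B by blast
    then show ?thesis unfolding optional_sets_def by (rule sigma_sets.Basic)
  qed
  finally show "(\<lambda>p. Y (snd p) (fst p)) -` B \<inter> space (NJ M F X) \<in> sets (NJ M F X)"
    by (rule opt_in_NJ)
qed

lemma vec_meas_NJ:
  fixes V :: "real \<Rightarrow> 'a \<Rightarrow> 'w::euclidean_space"
  assumes ad: "adapted M F V" and cd: "\<forall>\<omega>\<in>space M. cadlag (\<lambda>t. V t \<omega>)"
  shows "(\<lambda>p. V (snd p) (fst p)) \<in> borel_measurable (NJ M F X)"
proof (rule iffD2[OF borel_measurable_euclidean_space], rule ballI)
  fix i :: 'w assume i: "i \<in> Basis"
  have "adapted M F (\<lambda>t \<omega>. V t \<omega> \<bullet> i)"
    unfolding adapted_def
  proof (intro allI impI ballI)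
    fix t :: real and B :: "real set" assume t: "t \<ge> 0" and B: "B \<in> sets borel"
    have mi: "(\<lambda>v::'w. v \<bullet> i) \<in> borel_measurable borel"
      by (intro borel_measurable_continuous_onI continuous_intros)
    have "(\<lambda>v. v \<bullet> i) -` B \<inter> space borel \<in> sets borel"
      by (rule measurable_sets[OF mi B])
    then have "(\<lambda>v. v \<bullet> i) -` B \<in> sets borel" by (simp only: space_borel Int_UNIV_right)
    then have "V t -` ((\<lambda>v. v \<bullet> i) -` B) \<inter> space M \<in> F t" using ad t unfolding adapted_def by blast
    then show "(\<lambda>\<omega>. V t \<omega> \<bullet> i) -` B \<inter> space M \<in> F t" by (simp add: vimage_def)
  qed
  moreover have "\<forall>\<omega>\<in>space M. cadlag (\<lambda>t. V t \<omega> \<bullet> i)"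
  proof
    fix \<omega> assume "\<omega> \<in> space M"
    then have "cadlag (\<lambda>t. V t \<omega>)" using cd by blast
    then show "cadlag (\<lambda>t. V t \<omega> \<bullet> i)" by (rule cadlag_inner)
  qed
  ultimately show "(\<lambda>p. V (snd p) (fst p) \<bullet> i) \<in> borel_measurable (NJ M F X)"
    by (rule opt_meas_NJ)
qed

lemma shift_in_Dspace:
  assumes cd: "\<forall>\<omega>\<in>space M. cadlag (\<lambda>t. X t \<omega>)" and p: "p \<in> space M \<times> {0..}"
  shows "shift_proc X p \<in> Dspace"
proof -
  have "cadlag (\<lambda>t. X t (fst p))" "snd p \<ge> 0" using cd p by auto
  from shift_cadlag[OF this] show ?thesis by (simp add: shift_proc_def)
qed

lemma sets_Dmeasure: "sets Dmeasure = sigma_sets Dspace {{f\<in>Dspace. f s \<in> B} | s B. s \<ge> 0 \<and> B \<in> sets borel}"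
  unfolding Dmeasure_def by (rule sets_measure_of) blast

lemma space_Dmeasure: "space Dmeasure = Dspace"
  unfolding Dmeasure_def by (rule space_measure_of) blast

lemma shift_preimage_in:
  assumes cd: "\<forall>\<omega>\<in>space M. cadlag (\<lambda>t. X t \<omega>)" and s: "s \<ge> 0" and B: "B \<in> sets borel"
  shows "{p \<in> space M \<times> {0..}. shift_proc X p s \<in> B} \<in> sigma_shift M X"
proof -
  have A: "{f\<in>Dspace. f s \<in> B} \<in> sets Dmeasure"
    unfolding sets_Dmeasure by (rule sigma_sets.Basic) (use s B in blast)
  have "{p \<in> space M \<times> {0..}. shift_proc X p s \<in> B} = shift_proc X -` {f\<in>Dspace. f s \<in> B} \<inter> (space M \<times> {0..})"
    using shift_in_Dspace[OF cd] by blast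
  also have "\<dots> \<in> sigma_shift M X"
    unfolding sigma_shift_def sets_vimage_algebra by (rule sigma_sets.Basic) (use A in blast)
  finally show ?thesis .
qed

lemma shift_meas_NJ:
  assumes cd: "\<forall>\<omega>\<in>space M. cadlag (\<lambda>t. X t \<omega>)" and s: "s \<ge> 0"
  shows "(\<lambda>p. shift_proc X p s) \<in> borel_measurable (NJ M F X)"
  unfolding measurable_def
proof (intro CollectI conjI ballI)
  show "(\<lambda>p. shift_proc X p s) \<in> space (NJ M F X) \<rightarrow> space borel" by simp
  fix B :: "'b set" assume B: "B \<in> sets borel"
  have "(\<lambda>p. shift_proc X p s) -` B \<inter> space (NJ M F X) = {p \<in> space M \<times> {0..}. shift_proc X p s \<in> B}"
    by (auto simp: space_NJ)
  also have "\<dots> \<in> sigma_shift M X" by (rule shift_preimage_in[OF cd s B])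
  finally show "(\<lambda>p. shift_proc X p s) -` B \<inter> space (NJ M F X) \<in> sets (NJ M F X)"
    by (rule shift_in_NJ)
qed

lemma id_adapted:
  assumes "filtration_on M F"
  shows "adapted M F (\<lambda>t (\<omega>::'a). t)"
  unfolding adapted_def
proof (intro allI impI ballI)
  fix t :: real and B :: "real set" assume t: "t \<ge> 0"
  then interpret sigma_algebra "space M" "F t" using assms unfolding filtration_on_def by blast
  show "(\<lambda>\<omega>. t) -` B \<inter> space M \<in> F t"
    by (cases "t \<in> B") auto
qed

lemma id_cadlag: "cadlag (\<lambda>t::real. t)"
  unfolding cadlag_def by (auto intro!: tendsto_ident_at)

lemma snd_meas_NJ:
  assumes "filtration_on M F"
  shows "snd \<in> borel_measurable (NJ M F X)"
  using opt_meas_NJ[OF id_adapted[OF assms], of X] id_cadlag by simp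

lemma min_adapted:
  assumes filt: "filtration_on M F" and ad: "adapted M F X" and u: "u \<ge> 0"
  shows "adapted M F (\<lambda>t \<omega>. X (min t u) \<omega>)"
  unfolding adapted_def
proof (intro allI impI ballI)
  fix t :: real and B :: "'b set" assume t: "t \<ge> 0" and B: "B \<in> sets borel"
  have "min t u \<ge> 0" using t u by simp
  then have "X (min t u) -` B \<inter> space M \<in> F (min t u)" using ad B unfolding adapted_def by blast
  moreover have "F (min t u) \<subseteq> F t" using filt \<open>min t u \<ge> 0\<close> unfolding filtration_on_def by simp
  ultimately show "(\<lambda>\<omega>. X (min t u) \<omega>) -` B \<inter> space M \<in> F t" by blast
qed

lemma Xu_meas_NJ:
  fixes X :: "real \<Rightarrow> 'a \<Rightarrow> 'v::euclidean_space"
  assumes filt: "filtration_on M F" and ad: "adapted M F X"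
    and cd: "\<forall>\<omega>\<in>space M. cadlag (\<lambda>t. X t \<omega>)" and u: "u \<ge> 0"
  shows "(\<lambda>p. X u (fst p)) \<in> borel_measurable (NJ M F X)"
proof -
  let ?N = "NJ M F X"
  have sm: "snd \<in> borel_measurable ?N" by (rule snd_meas_NJ[OF filt])
  have Z: "(\<lambda>p. X (min (snd p) u) (fst p)) \<in> borel_measurable ?N"
    using vec_meas_NJ[OF min_adapted[OF filt ad u], of X] cd cadlag_min by blast
  have Xm: "(\<lambda>p. X (snd p) (fst p)) \<in> borel_measurable ?N"
    using vec_meas_NJ[OF ad cd, of X] .
  have r: "(\<lambda>p. max 0 (u - snd p)) \<in> borel_measurable ?N"
    using sm by measurable
  have S: "(\<lambda>p. shift_proc X p (max 0 (u - snd p))) \<in> borel_measurable ?N"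
  proof (rule eval_measurable[where Phi = "shift_proc X"])
    show "(\<lambda>x. shift_proc X x s) \<in> borel_measurable ?N" if "s \<ge> 0" for s
      by (rule shift_meas_NJ[OF cd that])
    show "(\<lambda>p. max 0 (u - snd p)) \<in> borel_measurable ?N" by (rule r)
    show "max 0 (u - snd x) \<ge> 0" for x by simp
    show "(shift_proc X x \<longlongrightarrow> shift_proc X x (max 0 (u - snd x))) (at_right (max 0 (u - snd x)))"
      if "x \<in> space ?N" for x
    proof -
      have "shift_proc X x \<in> Dspace" using shift_in_Dspace[OF cd] that by (simp add: space_NJ)
      then show ?thesis unfolding Dspace_def by (auto intro: cadlag_rc)
    qed
  qed
  have pre: "{p \<in> space ?N. u \<le> snd p} \<in> sets ?N"
  proof -
    have "snd -` {u..} \<inter> space ?N \<in> sets ?N" by (rule measurable_sets[OF sm]) simp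
    moreover have "snd -` {u..} \<inter> space ?N = {p \<in> space ?N. u \<le> snd p}" by auto
    ultimately show ?thesis by simp
  qed
  have H: "(\<lambda>p. if u \<le> snd p then X (min (snd p) u) (fst p)
             else X (snd p) (fst p) + shift_proc X p (max 0 (u - snd p))) \<in> borel_measurable ?N"
    by (rule measurable_If[OF Z borel_measurable_add[OF Xm S] pre])
  show ?thesis
  proof (rule measurable_cong[THEN iffD1, OF _ H])
    fix p assume p: "p \<in> space ?N"
    then have t: "snd p \<ge> 0" by (auto simp: space_NJ)
    show "(if u \<le> snd p then X (min (snd p) u) (fst p)
             else X (snd p) (fst p) + shift_proc X p (max 0 (u - snd p))) = X u (fst p)"
      using t by (auto simp: shift_proc_def min_def)
  qed
qed

lemma sigma_proc_sub: "sigma_proc M X \<subseteq> Pow (space M)"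
proof
  fix A assume "A \<in> sigma_proc M X"
  then have "A \<subseteq> space M" unfolding sigma_proc_def
    by (rule sigma_sets_into_sp[rotated]) blast
  then show "A \<in> Pow (space M)" by simp
qed

lemma strip_in_NJ:
  fixes X :: "real \<Rightarrow> 'a \<Rightarrow> 'v::euclidean_space"
  assumes filt: "filtration_on M F" and ad: "adapted M F X"
    and cd: "\<forall>\<omega>\<in>space M. cadlag (\<lambda>t. X t \<omega>)" and A: "A \<in> sigma_proc M X"
  shows "A \<times> {0..} \<in> sets (NJ M F X)"
proof -
  let ?G = "{X t -` B \<inter> space M | t B. t \<ge> 0 \<and> B \<in> sets borel}"
  have Gsub: "?G \<subseteq> Pow (space M)" by blast
  have fm: "fst \<in> measurable (NJ M F X) (sigma (space M) ?G)"
  proof (rule measurable_measure_of[OF Gsub])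
    show "fst \<in> space (NJ M F X) \<rightarrow> space M" by (auto simp: space_NJ)
    fix y assume "y \<in> ?G"
    then obtain t B where y: "y = X t -` B \<inter> space M" and t: "t \<ge> 0" and B: "B \<in> sets borel" by blast
    have "(\<lambda>p. X t (fst p)) -` B \<inter> space (NJ M F X) \<in> sets (NJ M F X)"
      by (rule measurable_sets[OF Xu_meas_NJ[OF filt ad cd t] B])
    moreover have "(\<lambda>p. X t (fst p)) -` B \<inter> space (NJ M F X) = fst -` y \<inter> space (NJ M F X)"
      by (auto simp: y space_NJ)
    ultimately show "fst -` y \<inter> space (NJ M F X) \<in> sets (NJ M F X)" by simp
  qed
  have "A \<in> sets (sigma (space M) ?G)"
    using A unfolding sigma_proc_def by (subst sets_measure_of[OF Gsub])
  from measurable_sets[OF fm this] have "fst -` A \<inter> space (NJ M F X) \<in> sets (NJ M F X)" .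
  moreover have "fst -` A \<inter> space (NJ M F X) = A \<times> {0..}"
    using sigma_proc_sub A by (auto simp: space_NJ)
  ultimately show ?thesis by simp
qed

lemma rect_in_NJ:
  fixes X :: "real \<Rightarrow> 'a \<Rightarrow> 'v::euclidean_space"
  assumes filt: "filtration_on M F" and ad: "adapted M F X"
    and cd: "\<forall>\<omega>\<in>space M. cadlag (\<lambda>t. X t \<omega>)" and A: "A \<in> sigma_proc M X"
    and b: "b \<in> sets (restrict_space borel {0::real..})"
  shows "A \<times> b \<in> sets (NJ M F X)"
proof -
  obtain b' where b': "b' \<in> sets borel" "b = {0..} \<inter> b'" using b by (auto simp: sets_restrict_space)
  have "snd -` b' \<inter> space (NJ M F X) \<in> sets (NJ M F X)"
    by (rule measurable_sets[OF snd_meas_NJ[OF filt] b'(1)])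
  moreover have "snd -` b' \<inter> space (NJ M F X) = space M \<times> b" by (auto simp: space_NJ b'(2))
  ultimately have 1: "space M \<times> b \<in> sets (NJ M F X)" by simp
  have 2: "A \<times> {0..} \<in> sets (NJ M F X)" by (rule strip_in_NJ[OF filt ad cd A])
  have "A \<times> b = (A \<times> {0..}) \<inter> (space M \<times> b)" using sigma_proc_sub A b' by auto
  then show ?thesis using sets.Int[OF 2 1] by simp
qed

lemma space_prodR: "space (M \<Otimes>\<^sub>M restrict_space borel {0::real..}) = space M \<times> {0..}"
  by (simp add: space_pair_measure space_restrict_space)

lemma J_sub_prod:
  fixes X :: "real \<Rightarrow> 'a \<Rightarrow> 'v::euclidean_space"
  assumes filt: "filtration_on M F" and ad: "adapted M F X"
    and cd: "\<forall>\<omega>\<in>space M. cadlag (\<lambda>t. X t \<omega>)"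
  shows "join_sets M (optional_sets M F) (sigma_shift M X) \<subseteq> prod_sets M"
proof -
  let ?N = "M \<Otimes>\<^sub>M restrict_space borel {0::real..}"
  have O: "optional_sets M F \<subseteq> sets ?N"
    unfolding optional_sets_def
  proof (subst space_prodR[symmetric], rule sets.sigma_sets_subset, rule subsetI)
    fix E assume "E \<in> {{p \<in> space M \<times> {0..}. Y (snd p) (fst p) \<in> B} | (Y :: real \<Rightarrow> 'a \<Rightarrow> real) B.
        adapted M F Y \<and> (\<forall>\<omega>\<in>space M. cadlag (\<lambda>t. Y t \<omega>)) \<and> B \<in> sets borel}"
    then obtain Y :: "real \<Rightarrow> 'a \<Rightarrow> real" and B where E: "E = {p \<in> space M \<times> {0..}. Y (snd p) (fst p) \<in> B}"
      and Ya: "adapted M F Y" and Yc: "\<forall>\<omega>\<in>space M. cadlag (\<lambda>t. Y t \<omega>)" and B: "B \<in> sets borel" by blast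
    have "(\<lambda>p. Y (snd p) (fst p)) \<in> borel_measurable ?N"
    proof (rule measurable_prodR[where r=snd and Y=Y])
      show "Y t \<in> borel_measurable M" if "t \<ge> 0" for t by (rule adapted_meas[OF Ya filt that])
      show "((\<lambda>s. Y s \<omega>) \<longlongrightarrow> Y t \<omega>) (at_right t)" if "\<omega> \<in> space M" "t \<ge> 0" for \<omega> t
        using Yc that by (auto intro: cadlag_rc)
    qed (auto intro: snd_measR)
    from measurable_sets[OF this B] show "E \<in> sets ?N" by (simp add: E space_prodR vimage_def Int_def conj_commute)
  qed
  have fD: "shift_proc X \<in> measurable ?N Dmeasure"
    unfolding Dmeasure_def
  proof (rule measurable_measure_of)
    show "{{f \<in> (Dspace :: (real \<Rightarrow> 'v) set). f s \<in> B} | s B. 0 \<le> s \<and> B \<in> sets borel} \<subseteq> Pow Dspace" by blast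
    show "shift_proc X \<in> space ?N \<rightarrow> Dspace" using shift_in_Dspace[OF cd] by (auto simp: space_prodR)
    fix y assume "y \<in> {{f \<in> (Dspace :: (real \<Rightarrow> 'v) set). f s \<in> B} | s B. 0 \<le> s \<and> B \<in> sets borel}"
    then obtain s and B :: "'v set" where y: "y = {f \<in> Dspace. f s \<in> B}" and s: "s \<ge> 0" and B: "B \<in> sets borel"
      by blast
    have m1: "(\<lambda>p. X (snd p + s) (fst p)) \<in> borel_measurable ?N"
    proof (rule measurable_prodR[where r="\<lambda>p. snd p + s" and Y=X])
      show "X t \<in> borel_measurable M" if "t \<ge> 0" for t by (rule adapted_meas[OF ad filt that])
      show "((\<lambda>s. X s \<omega>) \<longlongrightarrow> X t \<omega>) (at_right t)" if "\<omega> \<in> space M" "t \<ge> 0" for \<omega> t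
        using cd that by (auto intro: cadlag_rc)
      show "(\<lambda>p. snd p + s) \<in> borel_measurable ?N" using snd_measR by measurable
    qed (use s in \<open>auto simp: space_prodR\<close>)
    have m2: "(\<lambda>p. X (snd p) (fst p)) \<in> borel_measurable ?N"
    proof (rule measurable_prodR[where r=snd and Y=X])
      show "X t \<in> borel_measurable M" if "t \<ge> 0" for t by (rule adapted_meas[OF ad filt that])
      show "((\<lambda>s. X s \<omega>) \<longlongrightarrow> X t \<omega>) (at_right t)" if "\<omega> \<in> space M" "t \<ge> 0" for \<omega> t
        using cd that by (auto intro: cadlag_rc)
    qed (auto intro: snd_measR simp: space_prodR)
    have "(\<lambda>p. X (snd p + s) (fst p) - X (snd p) (fst p)) -` B \<inter> space ?N \<in> sets ?N"
      by (rule measurable_sets[OF borel_measurable_diff[OF m1 m2] B])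
    moreover have "(\<lambda>p. X (snd p + s) (fst p) - X (snd p) (fst p)) -` B \<inter> space ?N = shift_proc X -` y \<inter> space ?N"
      using shift_in_Dspace[OF cd] s by (auto simp: y space_prodR shift_proc_def)
    ultimately show "shift_proc X -` y \<inter> space ?N \<in> sets ?N" by simp
  qed
  have S: "sigma_shift M X \<subseteq> sets ?N"
  proof -
    have "{shift_proc X -` A \<inter> (space M \<times> {0..}) | A. A \<in> sets (Dmeasure :: (real \<Rightarrow> 'v) measure)} \<subseteq> sets ?N"
      using measurable_sets[OF fD] by (auto simp: space_prodR)
    then have "sigma_shift M X \<subseteq> sets ?N"
      unfolding sigma_shift_def sets_vimage_algebra
      using sets.sigma_sets_subset[of _ ?N] by (simp add: space_prodR)
    then show ?thesis .
  qed
  show ?thesis unfolding join_sets_def prod_sets_def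
    by (subst space_prodR[symmetric], rule sets.sigma_sets_subset) (use O S in blast)
qed

lemma prod_sets_eq: "prod_sets M = sigma_sets (space M \<times> {0..}) {a \<times> b | a b. a \<in> sets M \<and> b \<in> sets (restrict_space borel {0::real..})}"
  unfolding prod_sets_def sets_pair_measure by (simp add: space_restrict_space)

theorem lemma3p19:
  fixes M :: "'a measure" and F :: "real \<Rightarrow> 'a set set"
    and X :: "real \<Rightarrow> 'a \<Rightarrow> 'v::euclidean_space"
  assumes "prob_space M"
    and "filtration_on M F"
    and "levy_process M F X"
  shows "(sets M = sigma_proc M X \<longrightarrow>
            prod_sets M = join_sets M (optional_sets M F) (sigma_shift M X))
       \<and> (eq_upto_null M (sets M) (sigma_proc M X) \<longrightarrow>
            eq_upto_evanescent M (prod_sets M) (join_sets M (optional_sets M F) (sigma_shift M X)))"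
proof -
  have filt: "filtration_on M F" by fact
  have ad: "adapted M F X" and cd: "\<forall>\<omega>\<in>space M. cadlag (\<lambda>t. X t \<omega>)"
    using assms(3) unfolding levy_process_def by auto
  let ?J = "join_sets M (optional_sets M F) (sigma_shift M X)"
  let ?R = "restrict_space borel {0::real..}"
  have JP: "?J \<subseteq> prod_sets M" by (rule J_sub_prod[OF filt ad cd])
  have Jsig: "sigma_sets (space M \<times> {0..}) G \<subseteq> ?J" if "G \<subseteq> ?J" for G
    using that sets.sigma_sets_subset[of G "NJ M F X"] by (simp add: sets_NJ space_NJ)
  have rect: "a \<times> b \<in> ?J" if "a \<in> sigma_proc M X" "b \<in> sets ?R" for a b
    using rect_in_NJ[OF filt ad cd that] by (simp add: sets_NJ)
  have part1: "prod_sets M = ?J" if eq: "sets M = sigma_proc M X"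
  proof
    show "prod_sets M \<subseteq> ?J" unfolding prod_sets_eq
      by (rule Jsig) (use rect eq in auto)
  qed (rule JP)
  have part2: "eq_upto_evanescent M (prod_sets M) ?J" if eqn: "eq_upto_null M (sets M) (sigma_proc M X)"
  proof -
    have key: "\<exists>S'\<in>?J. evanescent M ((S - S') \<union> (S' - S))"
      if "S \<in> sigma_sets (space M \<times> {0..}) {a \<times> b | a b. a \<in> sets M \<and> b \<in> sets ?R}" for S
      using that
    proof (induction rule: sigma_sets.induct)
      case (Basic S)
      then obtain a b where S: "S = a \<times> b" and a: "a \<in> sets M" and b: "b \<in> sets ?R" by blast
      have "\<forall>S\<in>sets M. \<exists>S'\<in>sigma_proc M X. \<exists>N\<in>null_sets M. ((S - S') \<union> (S' - S)) \<subseteq> N"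
        using eqn unfolding eq_upto_null_def by (rule conjunct1)
      then have "\<exists>S'\<in>sigma_proc M X. \<exists>N\<in>null_sets M. ((a - S') \<union> (S' - a)) \<subseteq> N" using a by (rule bspec)
      then obtain a' N where a': "a' \<in> sigma_proc M X" and N: "N \<in> null_sets M" and sub: "(a - a') \<union> (a' - a) \<subseteq> N"
        by blast
      have "a' \<times> b \<in> ?J" by (rule rect[OF a' b])
      moreover have "evanescent M ((S - a' \<times> b) \<union> (a' \<times> b - S))"
      proof -
        have "(S - a' \<times> b) \<union> (a' \<times> b - S) \<subseteq> ((a - a') \<union> (a' - a)) \<times> (UNIV :: real set)" unfolding S by blast
        then have "fst ` ((S - a' \<times> b) \<union> (a' \<times> b - S)) \<subseteq> fst ` (((a - a') \<union> (a' - a)) \<times> (UNIV :: real set))"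
          by (rule image_mono)
        also have "\<dots> = (a - a') \<union> (a' - a)" by simp
        also have "\<dots> \<subseteq> N" by (rule sub)
        finally show ?thesis unfolding evanescent_def using N by blast
      qed
      ultimately show ?case by blast
    next
      case Empty
      have "{} \<in> ?J" unfolding join_sets_def by (rule sigma_sets.Empty)
      moreover have "evanescent M (({} - {}) \<union> ({} - {}))" unfolding evanescent_def by auto
      ultimately show ?case by blast
    next
      case (Compl a)
      then obtain S' where S': "S' \<in> ?J" and ev: "evanescent M ((a - S') \<union> (S' - a))" by blast
      have "space M \<times> {0..} - S' \<in> ?J" using S' unfolding join_sets_def by (rule sigma_sets.Compl)
      moreover have "evanescent M (((space M \<times> {0..} - a) - (space M \<times> {0..} - S')) \<union> ((space M \<times> {0..} - S') - (space M \<times> {0..} - a)))"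
      proof -
        obtain N where N: "N \<in> null_sets M" "fst ` ((a - S') \<union> (S' - a)) \<subseteq> N" using ev unfolding evanescent_def by blast
        have "((space M \<times> {0..} - a) - (space M \<times> {0..} - S')) \<union> ((space M \<times> {0..} - S') - (space M \<times> {0..} - a)) \<subseteq> (a - S') \<union> (S' - a)"
          by blast
        then have "fst ` (((space M \<times> {0..} - a) - (space M \<times> {0..} - S')) \<union> ((space M \<times> {0..} - S') - (space M \<times> {0..} - a))) \<subseteq> N"
          using N(2) by (meson image_mono order_trans)
        then show ?thesis unfolding evanescent_def using N(1) by blast
      qed
      ultimately show ?case by blast
    next
      case (Union A)
      then have "\<forall>i. \<exists>S'. S' \<in> ?J \<and> (\<exists>N. N \<in> null_sets M \<and> fst ` ((A i - S') \<union> (S' - A i)) \<subseteq> N)"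
        unfolding evanescent_def by blast
      then obtain S' where "\<forall>i. S' i \<in> ?J \<and> (\<exists>N. N \<in> null_sets M \<and> fst ` ((A i - S' i) \<union> (S' i - A i)) \<subseteq> N)"
        by metis
      then obtain N where S': "\<And>i. S' i \<in> ?J" and N: "\<And>i. N i \<in> null_sets M"
        and sub: "\<And>i. fst ` ((A i - S' i) \<union> (S' i - A i)) \<subseteq> N i"
        by metis
      have "(\<Union>i. S' i) \<in> ?J" unfolding join_sets_def by (rule sigma_sets.Union) (use S' in \<open>simp add: join_sets_def\<close>)
      moreover have "evanescent M (((\<Union>i. A i) - (\<Union>i. S' i)) \<union> ((\<Union>i. S' i) - (\<Union>i. A i)))"
        unfolding evanescent_def
      proof (intro bexI[of _ "\<Union>i. N i"])
        show "(\<Union>i. N i) \<in> null_sets M" using N by blast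
        show "fst ` (((\<Union>i. A i) - (\<Union>i. S' i)) \<union> ((\<Union>i. S' i) - (\<Union>i. A i))) \<subseteq> (\<Union>i. N i)"
        proof
          fix x assume "x \<in> fst ` (((\<Union>i. A i) - (\<Union>i. S' i)) \<union> ((\<Union>i. S' i) - (\<Union>i. A i)))"
          then obtain p i where "x = fst p" "p \<in> (A i - S' i) \<union> (S' i - A i)" by blast
          then have "x \<in> N i" using sub[of i] by blast
          then show "x \<in> (\<Union>i. N i)" by blast
        qed
      qed
      ultimately show ?case by blast
    qed
    show ?thesis unfolding eq_upto_evanescent_def
    proof (intro conjI ballI)
      fix S assume "S \<in> prod_sets M"
      then show "\<exists>S'\<in>?J. evanescent M ((S - S') \<union> (S' - S))" unfolding prod_sets_eq by (rule key)
    next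
      fix S assume "S \<in> ?J"
      then have "S \<in> prod_sets M" using JP by blast
      moreover have "evanescent M ((S - S) \<union> (S - S))" unfolding evanescent_def by auto
      ultimately show "\<exists>S'\<in>prod_sets M. evanescent M ((S - S') \<union> (S' - S))" by blast
    qed
  qed
  show ?thesis using part1 part2 by blast
qed

end
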